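(* Let $r_1,r_2,\mu,a_{12},a_{13},a_{21},a_{31},d$ be positive with $r_1>a_{12}$ and $a_{31}>\mu$, let $c>c_*:=2\sqrt{d(a_{31}-\mu)}$ and $\rho=c^2/d$. Consider the vector field on $\mathbb{R}^4$ \[ \dot X_1=X_1\big(r_1(1-X_1)-a_{12}X_2-a_{13}Y\big),\quad \dot X_2=X_2\big(r_2(1-X_2)+a_{21}X_1\big),\quad \dot Y=\rho(Y-Z),\quad \dot Z=Y(-\mu+a_{31}X_1). \] Let $\sigma_1=\frac{\rho+\sqrt{\rho^2-4\rho(a_{31}-\mu)}}{2\rho}$, $\sigma_2=\frac{\rho+\sqrt{\rho^2+4\rho\mu}}{2\rho}$, \[ \Sigma=\Big\{0\le X_1\le1,\ 0\le X_2\le 1+\tfrac{a_{21}}{r_2},\ Y\ge0,\ \sigma_1Y\le Z\le\sigma_2Y\Big\}, \] and \[ P_i=\Big\{0<X_1<1,\ 0<X_2<1+\tfrac{a_{21}}{r_2},\ Y>0,\ Z=\sigma_iY\Big\},\quad i=1,2. \] Then at every point $p\in P_1\cup P_2$ the vector field points to the outside of $\Sigma$.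
   Context: For $c>c_*$ one has $0<\sigma_1<1<\sigma_2$. *)

theory Defs
  imports "HOL-Analysis.Analysis"
begin

definition vf :: "real \<Rightarrow> real \<Rightarrow> real \<Rightarrow> real \<Rightarrow> real \<Rightarrow> real \<Rightarrow> real \<Rightarrow> real \<Rightarrow>
    real \<times> real \<times> real \<times> real \<Rightarrow> real \<times> real \<times> real \<times> real" where
  "vf r1 r2 \<mu> a12 a13 a21 a31 \<rho> p =
     (case p of (X1, X2, Y, Z) \<Rightarrow>
       (X1 * (r1 * (1 - X1) - a12 * X2 - a13 * Y),
        X2 * (r2 * (1 - X2) + a21 * X1),
        \<rho> * (Y - Z),
        Y * (- \<mu> + a31 * X1)))"

definition Sigma_set :: "real \<Rightarrow> real \<Rightarrow> real \<Rightarrow> real \<Rightarrow> (real \<times> real \<times> real \<times> real) set" where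
  "Sigma_set r2 a21 \<sigma>1 \<sigma>2 = {(X1, X2, Y, Z). 0 \<le> X1 \<and> X1 \<le> 1 \<and> 0 \<le> X2 \<and> X2 \<le> 1 + a21 / r2
      \<and> 0 \<le> Y \<and> \<sigma>1 * Y \<le> Z \<and> Z \<le> \<sigma>2 * Y}"

definition P_set :: "real \<Rightarrow> real \<Rightarrow> real \<Rightarrow> (real \<times> real \<times> real \<times> real) set" where
  "P_set r2 a21 \<sigma> = {(X1, X2, Y, Z). 0 < X1 \<and> X1 < 1 \<and> 0 < X2 \<and> X2 < 1 + a21 / r2
      \<and> 0 < Y \<and> Z = \<sigma> * Y}"

definition points_outside :: "('a::real_vector) set \<Rightarrow> ('a \<Rightarrow> 'a) \<Rightarrow> 'a \<Rightarrow> bool" where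
  "points_outside S F p \<longleftrightarrow> (\<exists>\<epsilon>>0. \<forall>t. 0 < t \<and> t < \<epsilon> \<longrightarrow> p + t *\<^sub>R F p \<notin> S)"

end

theory Submission
  imports Defs
begin

theorem lemma5:
  fixes r1 r2 \<mu> a12 a13 a21 a31 d c :: real
  assumes "r1 > 0" "r2 > 0" "\<mu> > 0" "a12 > 0" "a13 > 0" "a21 > 0" "a31 > 0" "d > 0"
    and "r1 > a12" and "a31 > \<mu>"
    and "c > 2 * sqrt (d * (a31 - \<mu>))"
  defines "\<rho> \<equiv> c\<^sup>2 / d"
  defines "\<sigma>1 \<equiv> (\<rho> + sqrt (\<rho>\<^sup>2 - 4 * \<rho> * (a31 - \<mu>))) / (2 * \<rho>)"
  defines "\<sigma>2 \<equiv> (\<rho> + sqrt (\<rho>\<^sup>2 + 4 * \<rho> * \<mu>)) / (2 * \<rho>)"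
  assumes pP: "p \<in> P_set r2 a21 \<sigma>1 \<union> P_set r2 a21 \<sigma>2"
  shows "points_outside (Sigma_set r2 a21 \<sigma>1 \<sigma>2) (vf r1 r2 \<mu> a12 a13 a21 a31 \<rho>) p"
proof -
  have sq0: "sqrt (d * (a31 - \<mu>)) \<ge> 0" using assms by simp
  have c0: "c > 0" using sq0 assms(11) by linarith
  have "c\<^sup>2 > (2 * sqrt (d * (a31 - \<mu>)))\<^sup>2"
    using assms(11) sq0 by (intro power_strict_mono) auto
  also have "(2 * sqrt (d * (a31 - \<mu>)))\<^sup>2 = 4 * (d * (a31 - \<mu>))"
    using assms by (simp add: power_mult_distrib)
  finally have cd: "c\<^sup>2 > 4 * d * (a31 - \<mu>)" by simp
  have rho0: "\<rho> > 0" using c0 assms(8) unfolding \<rho>_def by simp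
  have "\<rho> > 4 * (a31 - \<mu>)" using cd assms(8) unfolding \<rho>_def by (simp add: field_simps)
  hence D1: "\<rho>\<^sup>2 - 4 * \<rho> * (a31 - \<mu>) \<ge> 0" using rho0 mult_left_mono[of "4 * (a31 - \<mu>)" \<rho> \<rho>] by (simp add: power2_eq_square algebra_simps)
  define s1 where "s1 = sqrt (\<rho>\<^sup>2 - 4 * \<rho> * (a31 - \<mu>))"
  have s1sq: "s1\<^sup>2 = \<rho>\<^sup>2 - 4 * \<rho> * (a31 - \<mu>)" using D1 unfolding s1_def by simp
  define s2 where "s2 = sqrt (\<rho>\<^sup>2 + 4 * \<rho> * \<mu>)"
  have s2sq: "s2\<^sup>2 = \<rho>\<^sup>2 + 4 * \<rho> * \<mu>" using rho0 assms(3) unfolding s2_def by simp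
  have e1: "\<rho> * \<sigma>1 ^ 2 - \<rho> * \<sigma>1 = - (a31 - \<mu>)"
    unfolding \<sigma>1_def s1_def[symmetric] using rho0 s1sq
    by (simp add: field_simps power2_eq_square) algebra
  have e2: "\<rho> * \<sigma>2 ^ 2 - \<rho> * \<sigma>2 = \<mu>"
    unfolding \<sigma>2_def s2_def[symmetric] using rho0 s2sq
    by (simp add: field_simps power2_eq_square) 
  obtain X1 X2 Y Z where p: "p = (X1, X2, Y, Z)" by (cases p) auto
  show ?thesis unfolding points_outside_def
  proof (intro exI[of _ 1] conjI allI impI)
    fix t :: real assume t: "0 < t \<and> t < 1"
    show "p + t *\<^sub>R vf r1 r2 \<mu> a12 a13 a21 a31 \<rho> p \<notin> Sigma_set r2 a21 \<sigma>1 \<sigma>2"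
      using pP
    proof (elim UnE)
      assume "p \<in> P_set r2 a21 \<sigma>1"
      hence h: "0 < X1" "X1 < 1" "0 < Y" "Z = \<sigma>1 * Y" unfolding P_set_def p by auto
      have "(Z + t * (Y * (- \<mu> + a31 * X1))) - \<sigma>1 * (Y + t * (\<rho> * (Y - Z)))
            = t * Y * (- \<mu> + a31 * X1 + (\<rho> * \<sigma>1 ^ 2 - \<rho> * \<sigma>1))"
        using h(4) by (simp add: algebra_simps power2_eq_square)
      also have "\<dots> = t * Y * (a31 * (X1 - 1))" using e1 by algebra
      also have "\<dots> < 0" using t h assms(7) by (simp add: mult_pos_neg)
      finally show ?thesis unfolding Sigma_set_def p vf_def by auto
    next
      assume "p \<in> P_set r2 a21 \<sigma>2"
      hence h: "0 < X1" "X1 < 1" "0 < Y" "Z = \<sigma>2 * Y" unfolding P_set_def p by auto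
      have "(Z + t * (Y * (- \<mu> + a31 * X1))) - \<sigma>2 * (Y + t * (\<rho> * (Y - Z)))
            = t * Y * (- \<mu> + a31 * X1 + (\<rho> * \<sigma>2 ^ 2 - \<rho> * \<sigma>2))"
        using h(4) by (simp add: algebra_simps power2_eq_square)
      also have "\<dots> = t * Y * (a31 * X1)" using e2 by simp
      also have "\<dots> > 0" using t h assms(7) by simp
      finally show ?thesis unfolding Sigma_set_def p vf_def by auto
    qed
  qed simp
qed

end
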